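(* Let $X$ be a random variable with survival function $\overline{F}(x) = \mathbb{P}(X > x)$ given by $\overline{F}(x) = 1$ for $x < 0$ and $\overline{F}(x) = (\lfloor x \rfloor + 2)^{-1}$ for $x \geq 0$. For $n \geq 2$ let $X_1, \dots, X_n$ be i.i.d. copies of $X$ and $\overline{X}_n = \frac{1}{n}\sum_{i=1}^n X_i$. Then $X \leq_{\mathrm{st}} \overline{X}_n$ for all $n \geq 2$.
   Context: For random variables $X, Y$, $X \leq_{\mathrm{st}} Y$ means $\mathbb{P}(X > x) \leq \mathbb{P}(Y > x)$ for all $x \in \mathbb{R}$. *)

theory Defs
  imports "HOL-Probability.Probability"
begin

definition surv_ex :: "real \<Rightarrow> real" where
  "surv_ex x = (if x < 0 then 1 else 1 / (real_of_int \<lfloor>x\<rfloor> + 2))"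

definition st_le :: "'a measure \<Rightarrow> ('a \<Rightarrow> real) \<Rightarrow> ('a \<Rightarrow> real) \<Rightarrow> bool" where
  "st_le M X Y \<longleftrightarrow> (\<forall>x::real. measure M {\<omega> \<in> space M. X \<omega> > x} \<le> measure M {\<omega> \<in> space M. Y \<omega> > x})"

end

theory Submission
  imports Defs
begin

lemma ineq:
  fixes x :: real and n :: nat
  assumes n: "n \<ge> 1" and x: "x \<ge> 0"
  shows "1 / (real_of_int \<lfloor>x\<rfloor> + 2) \<le> 1 - (1 - 1 / (real_of_int \<lfloor>real n * x\<rfloor> + 2)) ^ n"
proof -
  define K where "K = int n * (\<lfloor>x\<rfloor> + 1)"
  define b where "b = real_of_int \<lfloor>x\<rfloor> + 1"
  define N where "N = real n * b"
  have NK: "N = real_of_int K" unfolding N_def K_def b_def by simp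
  have b1: "b \<ge> 1" using x unfolding b_def by simp
  have n1: "real n \<ge> 1" using n by simp
  have "1 * 1 \<le> real n * b" using n1 b1 by (intro mult_mono) auto
  hence N1: "N \<ge> 1" unfolding N_def by simp
  have "real_of_int \<lfloor>real n * x\<rfloor> \<le> real n * x" by simp
  also have "\<dots> < real n * b" unfolding b_def using n1 by (intro mult_strict_left_mono) (linarith, simp)
  finally have "real_of_int \<lfloor>real n * x\<rfloor> < real_of_int K" using NK N_def by simp
  hence "\<lfloor>real n * x\<rfloor> < K" by (simp only: of_int_less_iff)
  hence "\<lfloor>real n * x\<rfloor> + 1 \<le> K" by simp
  hence "real_of_int (\<lfloor>real n * x\<rfloor> + 1) \<le> real_of_int K" by (simp only: of_int_le_iff)
  hence aN: "real_of_int \<lfloor>real n * x\<rfloor> + 2 \<le> N + 1" using NK by simp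
  have a2: "real_of_int \<lfloor>real n * x\<rfloor> + 2 \<ge> 2" using n x by simp
  have "1 - 1 / (real_of_int \<lfloor>real n * x\<rfloor> + 2) \<le> N / (N+1)"
  proof -
    have "1 / (N+1) \<le> 1 / (real_of_int \<lfloor>real n * x\<rfloor> + 2)"
      using aN a2 N1 by (intro divide_left_mono mult_pos_pos; linarith)
    thus ?thesis using N1 by (simp add: field_simps)
  qed
  moreover have "0 \<le> 1 - 1 / (real_of_int \<lfloor>real n * x\<rfloor> + 2)" using a2 by (simp add: divide_simps del: of_int_add)
  ultimately have p: "(1 - 1 / (real_of_int \<lfloor>real n * x\<rfloor> + 2)) ^ n \<le> (N/(N+1)) ^ n"
    by (rule power_mono)
  have B: "1 + real n * (1/N) \<le> (1 + 1/N) ^ n" proof (intro Bernoulli_inequality)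
    have "0 \<le> 1/N" using N1 by simp
    thus "-1 \<le> 1/N" by linarith
  qed
  have "1 + real n * (1/N) = (b+1)/b" unfolding N_def using n1 b1 by (simp add: field_simps)
  moreover have "(1 + 1/N) = (N+1)/N" using N1 by (simp add: field_simps)
  ultimately have "(b+1)/b \<le> ((N+1)/N)^n" using B by simp
  moreover have "0 < (b+1)/b" using b1 by simp
  ultimately have "1 / ((N+1)/N)^n \<le> 1 / ((b+1)/b)" by (intro divide_left_mono mult_pos_pos) auto
  hence "(N/(N+1))^n \<le> b/(b+1)" by (simp add: power_divide)
  with p have "(1 - 1 / (real_of_int \<lfloor>real n * x\<rfloor> + 2)) ^ n \<le> b/(b+1)" by linarith
  moreover have "b/(b+1) = 1 - 1/(b+1)" using b1 by (simp add: field_simps)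
  moreover have "b + 1 = real_of_int \<lfloor>x\<rfloor> + 2" unfolding b_def by simp
  ultimately show ?thesis by (metis diff_le_eq add.commute le_diff_eq)
qed

theorem proposition2:
  fixes M :: "'a measure" and X :: "'a \<Rightarrow> real" and Xs :: "nat \<Rightarrow> 'a \<Rightarrow> real" and n :: nat
  assumes "prob_space M"
    and "X \<in> borel_measurable M"
    and "\<And>x. measure M {\<omega> \<in> space M. X \<omega> > x} = surv_ex x"
    and "n \<ge> 2"
    and "prob_space.indep_vars M (\<lambda>_. borel) Xs {1..n}"
    and "\<And>i. i \<in> {1..n} \<Longrightarrow> distr M borel (Xs i) = distr M borel X"
  shows "st_le M X (\<lambda>\<omega>. (\<Sum>i=1..n. Xs i \<omega>) / real n)"
proof -
  interpret P: prob_space M by (rule assms(1))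
  have meas: "Xs i \<in> borel_measurable M" if "i \<in> {1..n}" for i
    using assms(5) that unfolding P.indep_vars_def by auto
  have law: "P.prob (Xs i -` A \<inter> space M) = P.prob (X -` A \<inter> space M)"
    if "i \<in> {1..n}" "A \<in> sets borel" for i A
  proof -
    have "P.prob (Xs i -` A \<inter> space M) = measure (distr M borel (Xs i)) A"
      using meas[OF that(1)] that(2) by (simp add: measure_distr)
    also have "\<dots> = measure (distr M borel X) A" using assms(6)[OF that(1)] by simp
    also have "\<dots> = P.prob (X -` A \<inter> space M)"
      using assms(2) that(2) by (simp add: measure_distr)
    finally show ?thesis .
  qed
  have survX: "P.prob (X -` {t<..} \<inter> space M) = surv_ex t" for t
  proof -
    have "X -` {t<..} \<inter> space M = {\<omega> \<in> space M. X \<omega> > t}" by auto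
    thus ?thesis using assms(3) by simp
  qed
  have surv: "P.prob (Xs i -` {t<..} \<inter> space M) = surv_ex t" if "i \<in> {1..n}" for i t
    using law[OF that, of "{t<..}"] survX by simp
  have nonneg: "AE \<omega> in M. Xs i \<omega> \<ge> 0" if i: "i \<in> {1..n}" for i
  proof -
    have "AE \<omega> in M. Xs i \<omega> > - (1 / real (Suc k))" for k
    proof -
      have ev: "{\<omega> \<in> space M. Xs i \<omega> > - (1 / real (Suc k))} \<in> sets M"
        using meas[OF i] by measurable
      have "{\<omega> \<in> space M. Xs i \<omega> > - (1 / real (Suc k))} = Xs i -` {- (1 / real (Suc k))<..} \<inter> space M"
        by auto
      hence "P.prob {\<omega> \<in> space M. Xs i \<omega> > - (1 / real (Suc k))} = 1"
        using surv[OF i] by (simp add: surv_ex_def)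
      thus ?thesis using P.prob_Collect_eq_1[OF ev] by simp
    qed
    hence "AE \<omega> in M. \<forall>k. Xs i \<omega> > - (1 / real (Suc k))" by (simp add: AE_all_countable)
    thus ?thesis
    proof (rule AE_mp, intro AE_I2 impI)
      fix \<omega> assume h: "\<forall>k. Xs i \<omega> > - (1 / real (Suc k))"
      show "Xs i \<omega> \<ge> 0"
      proof (rule ccontr)
        assume "\<not> Xs i \<omega> \<ge> 0"
        hence "0 < - Xs i \<omega>" by simp
        then obtain k where "1 / real (Suc k) < - Xs i \<omega>"
          using reals_Archimedean by (metis inverse_eq_divide)
        with h show False by (metis minus_less_iff not_less_iff_gr_or_eq)
      qed
    qed
  qed
  have AEall: "AE \<omega> in M. \<forall>i\<in>{1..n}. Xs i \<omega> \<ge> 0"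
    by (rule AE_ball_countable') (use nonneg in auto)
  define S where "S = (\<lambda>\<omega>. (\<Sum>i=1..n. Xs i \<omega>) / real n)"
  have Sm: "S \<in> borel_measurable M" unfolding S_def
    using meas by (intro borel_measurable_divide borel_measurable_sum) auto
  have n1: "n \<ge> 1" using assms(4) by simp
  have "measure M {\<omega> \<in> space M. X \<omega> > x} \<le> measure M {\<omega> \<in> space M. S \<omega> > x}" for x
  proof -
    have evE: "{\<omega> \<in> space M. S \<omega> > x} \<in> sets M" using Sm by measurable
    show ?thesis
    proof (cases "x < 0")
      case True
      have "AE \<omega> in M. S \<omega> > x"
      proof (rule AE_mp[OF AEall], intro AE_I2 impI)
        fix \<omega> assume "\<forall>i\<in>{1..n}. Xs i \<omega> \<ge> 0"
        hence "S \<omega> \<ge> 0" unfolding S_def by (intro divide_nonneg_nonneg sum_nonneg) auto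
        thus "S \<omega> > x" using True by simp
      qed
      hence "P.prob {\<omega> \<in> space M. S \<omega> > x} = 1" using P.prob_Collect_eq_1[OF evE] by simp
      moreover have "P.prob {\<omega> \<in> space M. X \<omega> > x} \<le> 1" by simp
      ultimately show ?thesis by simp
    next
      case False
      hence x0: "x \<ge> 0" by simp
      define t where "t = real n * x"
      have t0: "t \<ge> 0" unfolding t_def using x0 by simp
      define C where "C = (\<Inter>i\<in>{1..n}. Xs i -` {..t} \<inter> space M)"
      have evC: "C \<in> sets M" unfolding C_def using meas n1
        by (intro sets.finite_INT) (auto intro: measurable_sets)
      have "P.prob C = (\<Prod>i\<in>{1..n}. P.prob (Xs i -` {..t} \<inter> space M))"
        unfolding C_def using n1 by (intro P.indep_varsD_finite[OF assms(5)]) auto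
      also have "\<dots> = (\<Prod>i\<in>{1..n}. 1 - surv_ex t)"
      proof (rule prod.cong)
        fix i assume i: "i \<in> {1..n}"
        have "Xs i -` {..t} \<inter> space M = space M - (Xs i -` {t<..} \<inter> space M)" by auto
        moreover have "Xs i -` {t<..} \<inter> space M \<in> sets M" using meas[OF i] by (auto intro: measurable_sets)
        ultimately show "P.prob (Xs i -` {..t} \<inter> space M) = 1 - surv_ex t"
          using P.prob_compl surv[OF i] by simp
      qed simp
      also have "\<dots> = (1 - surv_ex t) ^ n" by simp
      finally have PC: "P.prob C = (1 - surv_ex t) ^ n" .
      have PA: "P.prob (space M - C) = 1 - (1 - surv_ex t) ^ n"
        using P.prob_compl[OF evC] PC by simp
      have "P.prob (space M - C) \<le> P.prob {\<omega> \<in> space M. S \<omega> > x}"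
      proof (rule P.finite_measure_mono_AE[OF _ evE])
        show "AE \<omega> in M. \<omega> \<in> space M - C \<longrightarrow> \<omega> \<in> {\<omega> \<in> space M. S \<omega> > x}"
        proof (rule AE_mp[OF AEall], intro AE_I2 impI)
          fix \<omega> assume nn: "\<forall>i\<in>{1..n}. Xs i \<omega> \<ge> 0" and w: "\<omega> \<in> space M - C"
          then obtain i where i: "i \<in> {1..n}" and gt: "Xs i \<omega> > t" unfolding C_def by force
          have "Xs i \<omega> \<le> (\<Sum>j=1..n. Xs j \<omega>)"
            using nn i by (intro member_le_sum) auto
          hence "(\<Sum>j=1..n. Xs j \<omega>) > real n * x" using gt t_def by simp
          hence "S \<omega> > x" unfolding S_def using n1 by (simp add: field_simps)
          thus "\<omega> \<in> {\<omega> \<in> space M. S \<omega> > x}" using w by simp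
        qed
      qed
      moreover have "P.prob {\<omega> \<in> space M. X \<omega> > x} = surv_ex x" using assms(3) by simp
      moreover have "surv_ex x \<le> 1 - (1 - surv_ex t) ^ n"
      proof -
        have "surv_ex t = 1 / (real_of_int \<lfloor>real n * x\<rfloor> + 2)" using t0 unfolding surv_ex_def t_def by simp
        moreover have "surv_ex x = 1 / (real_of_int \<lfloor>x\<rfloor> + 2)" using x0 unfolding surv_ex_def by simp
        ultimately show ?thesis using ineq[OF n1 x0] by simp
      qed
      ultimately show ?thesis using PA by simp
    qed
  qed
  thus ?thesis unfolding st_le_def S_def by simp
qed

end
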